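(* If $r\ge 10$ is an integer, then $\rho_2(K(3r-3,r))=3$.
   Context: For integers $n\ge 2r$, the Kneser graph $K(n,r)$ has as vertices the $r$-element subsets of $[n]=\{1,\dots,n\}$, two vertices being adjacent iff they are disjoint. A $2$-packing of a graph $G$ is a set of vertices that are pairwise at distance at least $3$ in $G$ (equivalently, no two are adjacent and no two have a common neighbor); $\rho_2(G)$ is the maximum cardinality of a $2$-packing. *)

theory Defs
  imports Main
begin

definition kneser_vertices :: "nat \<Rightarrow> nat \<Rightarrow> nat set set" where
  "kneser_vertices n r = {A. A \<subseteq> {1..n} \<and> card A = r}"

text \<open>Adjacency in K(n,r): disjointness (for r >= 1 this is irreflexive).\<close>
definition kneser_adj :: "nat set \<Rightarrow> nat set \<Rightarrow> bool" where
  "kneser_adj A B \<longleftrightarrow> A \<inter> B = {}"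

text \<open>A 2-packing of K(n,r): a set of vertices, pairwise distinct ones being
  non-adjacent and having no common neighbour (i.e. pairwise distance at least 3).\<close>
definition kneser_2packing :: "nat \<Rightarrow> nat \<Rightarrow> nat set set \<Rightarrow> bool" where
  "kneser_2packing n r P \<longleftrightarrow> P \<subseteq> kneser_vertices n r \<and>
     (\<forall>A\<in>P. \<forall>B\<in>P. A \<noteq> B \<longrightarrow>
        \<not> kneser_adj A B \<and>
        \<not> (\<exists>C\<in>kneser_vertices n r. kneser_adj A C \<and> kneser_adj C B))"

definition rho2_kneser :: "nat \<Rightarrow> nat \<Rightarrow> nat" where
  "rho2_kneser n r = Max {card P | P. kneser_2packing n r P}"

end

theory Submission
  imports Defs
begin

lemma bonf4:
  assumes "finite a" "finite b" "finite c" "finite d"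
  shows "card a + card b + card c + card d \<le> card (a \<union> b \<union> c \<union> d)
    + card (a \<inter> b) + card (a \<inter> c) + card (a \<inter> d) + card (b \<inter> c) + card (b \<inter> d) + card (c \<inter> d)"
proof -
  have 1: "card a + card b = card (a \<union> b) + card (a \<inter> b)"
    using card_Un_Int assms by blast
  have 2: "card (a \<union> b) + card c = card (a \<union> b \<union> c) + card ((a \<union> b) \<inter> c)"
    using card_Un_Int assms by (meson finite_UnI)
  have "(a \<union> b) \<inter> c = (a \<inter> c) \<union> (b \<inter> c)" by blast
  hence h2b: "card ((a \<union> b) \<inter> c) \<le> card (a \<inter> c) + card (b \<inter> c)"
    by (metis card_Un_le)
  have 3: "card (a \<union> b \<union> c) + card d = card (a \<union> b \<union> c \<union> d) + card ((a \<union> b \<union> c) \<inter> d)"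
    using card_Un_Int assms by (meson finite_UnI)
  have "(a \<union> b \<union> c) \<inter> d = ((a \<inter> d) \<union> (b \<inter> d)) \<union> (c \<inter> d)" by blast
  hence "card ((a \<union> b \<union> c) \<inter> d) \<le> card ((a \<inter> d) \<union> (b \<inter> d)) + card (c \<inter> d)"
    by (metis card_Un_le)
  moreover have "card ((a \<inter> d) \<union> (b \<inter> d)) \<le> card (a \<inter> d) + card (b \<inter> d)"
    by (rule card_Un_le)
  ultimately show ?thesis using 1 2 h2b 3 by linarith
qed

lemma common_nb:
  assumes "A \<subseteq> {1..3*r-3}" "B \<subseteq> {1..3*r-3}" "card A = r" "card B = r"
    "card (A \<inter> B) \<ge> 3"
  shows "\<exists>C\<in>kneser_vertices (3*r-3) r. kneser_adj A C \<and> kneser_adj C B"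
proof -
  have fA: "finite A" "finite B" using assms(1,2) finite_subset by auto
  have "card A + card B = card (A \<union> B) + card (A \<inter> B)"
    using card_Un_Int fA by blast
  hence u: "card (A \<union> B) + 3 \<le> 2 * r" using assms by linarith
  define S where "S = {1..3*r-3} - (A \<union> B)"
  have "card S = card {1..3*r-3} - card (A \<union> B)"
    unfolding S_def using assms(1,2) by (intro card_Diff_subset) (auto intro: finite_subset)
  hence "card S \<ge> r" using u by simp
  then obtain C where C: "C \<subseteq> S" "card C = r"
    using obtain_subset_with_card_n by metis
  show ?thesis
  proof (rule bexI[of _ C])
    show "C \<in> kneser_vertices (3*r-3) r"
      using C unfolding kneser_vertices_def S_def by blast
    show "kneser_adj A C \<and> kneser_adj C B"
      using C unfolding kneser_adj_def S_def by blast
  qed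
qed

lemma pack_le3:
  assumes "kneser_2packing (3*r-3) r P" "r \<ge> 10"
  shows "card P \<le> 3"
proof (rule ccontr)
  assume "\<not> card P \<le> 3"
  hence "card P \<ge> 4" by simp
  then obtain Q where Q: "Q \<subseteq> P" "card Q = 4"
    using obtain_subset_with_card_n by metis
  then obtain a b c d where Qe: "Q = {a, b, c, d}" "distinct [a, b, c, d]"
    by (auto simp: card_Suc_eq numeral_eq_Suc)
  have V: "P \<subseteq> kneser_vertices (3*r-3) r" using assms(1) unfolding kneser_2packing_def by blast
  have small: "card (X \<inter> Y) \<le> 2" if "X \<in> P" "Y \<in> P" "X \<noteq> Y" for X Y
  proof (rule ccontr)
    assume "\<not> ?thesis"
    hence "card (X \<inter> Y) \<ge> 3" by simp
    moreover have "X \<subseteq> {1..3*r-3}" "Y \<subseteq> {1..3*r-3}" "card X = r" "card Y = r"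
      using V that unfolding kneser_vertices_def by auto
    ultimately have "\<exists>C\<in>kneser_vertices (3*r-3) r. kneser_adj X C \<and> kneser_adj C Y"
      using common_nb by blast
    thus False using assms(1) that unfolding kneser_2packing_def by blast
  qed
  have inP: "a \<in> P" "b \<in> P" "c \<in> P" "d \<in> P" using Q Qe by auto
  have sub: "X \<subseteq> {1..3*r-3}" "card X = r" if "X \<in> P" for X
    using V that unfolding kneser_vertices_def by auto
  have fin: "finite X" if "X \<in> P" for X using sub[OF that] finite_subset by blast
  have "a \<union> b \<union> c \<union> d \<subseteq> {1..3*r-3}" using sub inP by blast
  hence "card (a \<union> b \<union> c \<union> d) \<le> 3*r-3"
    by (metis card_atLeastAtMost card_mono diff_Suc_1 finite_atLeastAtMost)
  moreover have "card a + card b + card c + card d \<le> card (a \<union> b \<union> c \<union> d)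
    + card (a \<inter> b) + card (a \<inter> c) + card (a \<inter> d) + card (b \<inter> c) + card (b \<inter> d) + card (c \<inter> d)"
    using bonf4 fin inP by blast
  moreover have ne: "a \<noteq> b" "a \<noteq> c" "a \<noteq> d" "b \<noteq> c" "b \<noteq> d" "c \<noteq> d" using Qe(2) by auto
  moreover have "card (a \<inter> b) \<le> 2" using small[OF inP(1) inP(2) ne(1)] .
  moreover have "card (a \<inter> c) \<le> 2" using small[OF inP(1) inP(3) ne(2)] .
  moreover have "card (a \<inter> d) \<le> 2" using small[OF inP(1) inP(4) ne(3)] .
  moreover have "card (b \<inter> c) \<le> 2" using small[OF inP(2) inP(3) ne(4)] .
  moreover have "card (b \<inter> d) \<le> 2" using small[OF inP(2) inP(4) ne(5)] .
  moreover have "card (c \<inter> d) \<le> 2" using small[OF inP(3) inP(4) ne(6)] .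
  ultimately have "card a + card b + card c + card d \<le> (3*r-3) + 12" by linarith
  moreover have "card a = r" "card b = r" "card c = r" "card d = r" using sub inP by auto
  ultimately have "4*r \<le> (3*r-3) + 12" by simp
  thus False using assms(2) by arith
qed

lemma no_nb:
  assumes "A \<subseteq> {1..3*r-3}" "B \<subseteq> {1..3*r-3}" "card A = r" "card B = r"
    "card (A \<inter> B) \<le> 2" "r \<ge> 3"
  shows "\<not> (\<exists>C\<in>kneser_vertices (3*r-3) r. kneser_adj A C \<and> kneser_adj C B)"
proof
  assume "\<exists>C\<in>kneser_vertices (3*r-3) r. kneser_adj A C \<and> kneser_adj C B"
  then obtain C where C: "C \<subseteq> {1..3*r-3}" "card C = r" "A \<inter> C = {}" "C \<inter> B = {}"
    unfolding kneser_vertices_def kneser_adj_def by blast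
  have fA: "finite A" "finite B" using assms(1,2) finite_subset by auto
  have "card A + card B = card (A \<union> B) + card (A \<inter> B)"
    using card_Un_Int fA by blast
  hence u: "card (A \<union> B) + 2 \<ge> 2 * r" using assms by linarith
  have "C \<union> (A \<union> B) \<subseteq> {1..3*r-3}" using C assms by blast
  hence "card (C \<union> (A \<union> B)) \<le> 3*r-3"
    by (metis card_atLeastAtMost card_mono diff_Suc_1 finite_atLeastAtMost)
  moreover have "card (C \<union> (A \<union> B)) = card C + card (A \<union> B)"
    using C fA by (intro card_Un_disjoint) (auto intro: finite_subset)
  ultimately show False using u C assms(6) by linarith
qed

theorem proposition4p2:
  fixes r :: nat
  assumes "r \<ge> 10"
  shows "rho2_kneser (3 * r - 3) r = 3"
proof -
  define A where "A = {1..r}"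
  define B where "B = {1,2} \<union> {r+1..2*r-2}"
  define C where "C = insert 1 {2*r-1..3*r-3}"
  have cA: "card A = r" unfolding A_def by simp
  have cB: "card B = r" unfolding B_def using assms
    by (subst card_Un_disjoint) auto
  have cC: "card C = r" unfolding C_def using assms by simp
  have iAB: "A \<inter> B = {1,2}" unfolding A_def B_def using assms by auto
  have iAC: "A \<inter> C = {1}" unfolding A_def C_def using assms by auto
  have iBC: "B \<inter> C = {1}" unfolding B_def C_def using assms by auto
  have sA: "A \<subseteq> {1..3*r-3}" unfolding A_def using assms by auto
  have sB: "B \<subseteq> {1..3*r-3}" unfolding B_def using assms by auto
  have sC: "C \<subseteq> {1..3*r-3}" unfolding C_def using assms by auto
  have dAB: "A \<noteq> B" "A \<noteq> C" "B \<noteq> C"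
  proof -
    have "card (A \<inter> B) = 2" "card (A \<inter> C) = 1" "card (B \<inter> C) = 1" using iAB iAC iBC by auto
    thus "A \<noteq> B" "A \<noteq> C" "B \<noteq> C" using cA cB assms by auto
  qed
  have ok: "\<not> kneser_adj X Y \<and> \<not> (\<exists>D\<in>kneser_vertices (3*r-3) r. kneser_adj X D \<and> kneser_adj D Y)"
    if "X \<subseteq> {1..3*r-3}" "Y \<subseteq> {1..3*r-3}" "card X = r" "card Y = r"
       "X \<inter> Y \<noteq> {}" "card (X \<inter> Y) \<le> 2" for X Y
  proof
    show "\<not> kneser_adj X Y" using that(5) unfolding kneser_adj_def .
    show "\<not> (\<exists>D\<in>kneser_vertices (3*r-3) r. kneser_adj X D \<and> kneser_adj D Y)"
      using no_nb[OF that(1-4) that(6)] assms by linarith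
  qed
  have iBA: "B \<inter> A = {1,2}" "C \<inter> A = {1}" "C \<inter> B = {1}" using iAB iAC iBC by blast+
  have ok2: "\<not> kneser_adj X Y \<and> \<not> (\<exists>D\<in>kneser_vertices (3*r-3) r. kneser_adj X D \<and> kneser_adj D Y)"
    if "X \<in> {A,B,C}" "Y \<in> {A,B,C}" "X \<noteq> Y" for X Y
  proof -
    have "X = A \<and> Y = B \<or> X = A \<and> Y = C \<or> X = B \<and> Y = A \<or> X = B \<and> Y = C \<or> X = C \<and> Y = A \<or> X = C \<and> Y = B"
      using that by blast
    thus ?thesis
    proof (elim disjE conjE)
      assume "X = A" "Y = B" thus ?thesis using ok[OF sA sB cA cB] iAB by simp
    next
      assume "X = A" "Y = C" thus ?thesis using ok[OF sA sC cA cC] iAC by simp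
    next
      assume "X = B" "Y = A" thus ?thesis using ok[OF sB sA cB cA] iBA by simp
    next
      assume "X = B" "Y = C" thus ?thesis using ok[OF sB sC cB cC] iBC by simp
    next
      assume "X = C" "Y = A" thus ?thesis using ok[OF sC sA cC cA] iBA by simp
    next
      assume "X = C" "Y = B" thus ?thesis using ok[OF sC sB cC cB] iBA by simp
    qed
  qed
  have P: "kneser_2packing (3*r-3) r {A,B,C}"
    unfolding kneser_2packing_def
  proof
    show "{A, B, C} \<subseteq> kneser_vertices (3 * r - 3) r"
      using sA sB sC cA cB cC unfolding kneser_vertices_def by blast
    show "\<forall>X\<in>{A, B, C}. \<forall>Y\<in>{A, B, C}. X \<noteq> Y \<longrightarrow> \<not> kneser_adj X Y \<and>
        \<not> (\<exists>D\<in>kneser_vertices (3 * r - 3) r. kneser_adj X D \<and> kneser_adj D Y)"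
      using ok2 by blast
  qed
  have c3: "card {A,B,C} = 3" using dAB by simp
  have S: "{card P | P. kneser_2packing (3*r-3) r P} \<subseteq> {..3}"
    using pack_le3 assms by auto
  show ?thesis unfolding rho2_kneser_def
    apply (rule Max_eqI)
    using S finite_subset P c3 by auto
qed

end
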